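(* There are infinitely many (pairwise non-isomorphic) finite simple graphs $G$ such that $v(G) \equiv 0 \pmod 6$, $G$ is 2-connected, cubic, bipartite, and planar, and $G$ has no $\Lambda$-factor.
   Context: Graphs are finite, undirected, without loops or multiple edges; $v(G)=|V(G)|$. $\Lambda$ denotes the path on 3 vertices. A $\Lambda$-factor of $G$ is a spanning subgraph of $G$ each of whose connected components is a 3-vertex path. *)

theory Defs
  imports "HOL-Analysis.Analysis"
begin

type_synonym 'a graph = "'a set \<times> 'a set set"

definition simple_graph :: "'a graph \<Rightarrow> bool" where
  "simple_graph G \<longleftrightarrow> finite (fst G) \<and>
     (\<forall>e\<in>snd G. \<exists>u v. u \<noteq> v \<and> u \<in> fst G \<and> v \<in> fst G \<and> e = {u, v})"

definition reach :: "'a set set \<Rightarrow> 'a \<Rightarrow> 'a \<Rightarrow> bool" where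
  "reach E = (\<lambda>u v. {u, v} \<in> E)\<^sup>*\<^sup>*"

definition connected_graph :: "'a graph \<Rightarrow> bool" where
  "connected_graph G \<longleftrightarrow> fst G \<noteq> {} \<and> (\<forall>u\<in>fst G. \<forall>v\<in>fst G. reach (snd G) u v)"

definition delete_vertex :: "'a graph \<Rightarrow> 'a \<Rightarrow> 'a graph" where
  "delete_vertex G x = (fst G - {x}, {e\<in>snd G. x \<notin> e})"

definition two_connected :: "'a graph \<Rightarrow> bool" where
  "two_connected G \<longleftrightarrow> card (fst G) > 2 \<and> connected_graph G \<and>
     (\<forall>x\<in>fst G. connected_graph (delete_vertex G x))"

definition degree :: "'a graph \<Rightarrow> 'a \<Rightarrow> nat" where
  "degree G v = card {e\<in>snd G. v \<in> e}"

definition cubic :: "'a graph \<Rightarrow> bool" where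
  "cubic G \<longleftrightarrow> (\<forall>v\<in>fst G. degree G v = 3)"

definition bipartite :: "'a graph \<Rightarrow> bool" where
  "bipartite G \<longleftrightarrow> (\<exists>A\<subseteq>fst G. \<forall>e\<in>snd G. card (e \<inter> A) = 1)"

definition planar :: "'a graph \<Rightarrow> bool" where
  "planar G \<longleftrightarrow> (\<exists>(p :: 'a \<Rightarrow> real^2) (\<gamma> :: 'a set \<Rightarrow> real \<Rightarrow> real^2).
     inj_on p (fst G) \<and>
     (\<forall>e\<in>snd G. arc (\<gamma> e) \<and> {pathstart (\<gamma> e), pathfinish (\<gamma> e)} = p ` e \<and>
                 path_image (\<gamma> e) \<inter> p ` fst G \<subseteq> p ` e) \<and>
     (\<forall>e\<in>snd G. \<forall>e'\<in>snd G. e \<noteq> e' \<longrightarrow>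
                 path_image (\<gamma> e) \<inter> path_image (\<gamma> e') \<subseteq> p ` (e \<inter> e')))"

text \<open>A \<Lambda>-factor: a spanning subgraph (V, F), F \<subseteq> E, each of whose connected
  components is a path a - b - c on three vertices.\<close>
definition has_Lambda_factor :: "'a graph \<Rightarrow> bool" where
  "has_Lambda_factor G \<longleftrightarrow> (\<exists>F\<subseteq>snd G. \<forall>v\<in>fst G. \<exists>a b c.
      a \<noteq> b \<and> b \<noteq> c \<and> a \<noteq> c \<and> v \<in> {a, b, c} \<and>
      {w\<in>fst G. reach F v w} = {a, b, c} \<and>
      {e\<in>F. e \<subseteq> {a, b, c}} = {{a, b}, {b, c}})"

definition graph_iso :: "'a graph \<Rightarrow> 'b graph \<Rightarrow> bool" where
  "graph_iso G H \<longleftrightarrow> (\<exists>f. bij_betw f (fst G) (fst H) \<and>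
     (\<forall>u\<in>fst G. \<forall>v\<in>fst G. {u, v} \<in> snd G \<longleftrightarrow> {f u, f v} \<in> snd H))"

end

theory Submission
  imports Defs
begin


definition toff :: "nat \<Rightarrow> nat" where
 "toff r = [9,3,5,3,3,3,3,5,3,3,5,3,3,3,3,5,3,9,3,5,3,3,3,3,5,3] ! r"
definition tplus :: "nat \<Rightarrow> bool" where
 "tplus r \<longleftrightarrow> r \<in> {0,1,2,3,5,9,10,11,13,18,19,20,22}"
definition prv :: "nat \<Rightarrow> nat \<Rightarrow> nat" where
 "prv m v = (if v = 0 then 26*m+25 else if v mod 26 = 9 then v - 9 else v - 1)"
definition nxt :: "nat \<Rightarrow> nat \<Rightarrow> nat" where
 "nxt m v = (if v = 26*m+25 then 0 else if v mod 26 = 8 then v + 9 else v + 1)"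
definition thd :: "nat \<Rightarrow> nat" where
 "thd v = (if tplus (v mod 26) then v + toff (v mod 26) else v - toff (v mod 26))"
definition nbs :: "nat \<Rightarrow> nat \<Rightarrow> nat set" where
 "nbs m v = {prv m v, nxt m v, thd v}"

lemma dm26: "a < 26 \<Longrightarrow> (26*q + a) div 26 = q \<and> (26*q+a) mod 26 = (a::nat)"
  by simp
lemma eq26: "a < 26 \<Longrightarrow> b < 26 \<Longrightarrow> (26*q + a = 26*m + (b::nat)) \<longleftrightarrow> q = m \<and> a = b"
  by (metis dm26)
lemma eq26b: "a < 26 \<Longrightarrow> b < 26 \<Longrightarrow> (a + 26*q = b + 26*(m::nat)) \<longleftrightarrow> q = m \<and> a = b"
  "a < 26 \<Longrightarrow> b < 26 \<Longrightarrow> (a + 26*q = 26*m + (b::nat)) \<longleftrightarrow> q = m \<and> a = b"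
  "a < 26 \<Longrightarrow> b < 26 \<Longrightarrow> (26*q + a = b + 26*(m::nat)) \<longleftrightarrow> q = m \<and> a = b"
  "a < 26 \<Longrightarrow> (a + 26*q = 26*(m::nat)) \<longleftrightarrow> q = m \<and> a = 0"
  "b < 26 \<Longrightarrow> (26*q = b + 26*(m::nat)) \<longleftrightarrow> q = m \<and> b = 0"
  "b < 26 \<Longrightarrow> (26*q = 26*(m::nat) + b) \<longleftrightarrow> q = m \<and> b = 0"
  using eq26[of a b q m] eq26[of a 0 q m] eq26[of 0 b q m] by (simp_all add: add.commute)
lemma dvd26: "\<not> (26::nat) dvd Suc (26*q)" "Suc (26*q) mod 26 = 1"
   "\<not> (26::nat) dvd Suc (Suc (26*q))" "Suc (Suc (26*q)) mod 26 = 2"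
  using dm26[of 1 q] dm26[of 2 q] by (simp_all add: dvd_eq_mod_eq_0)
lemma suc26[simp]: "Suc (26*q) mod 26 = 1" "Suc (Suc (26*q)) mod 26 = 2"
  "Suc (26*q) div 26 = q" "Suc (Suc (26*q)) div 26 = q"
  "(26*q + c) div 26 = q + c div 26" "(26*q + c) mod 26 = c mod 26"
  using dm26[of 1 q] dm26[of 2 q] by simp_all
lemma less26: "(r::nat) < 26 \<Longrightarrow> r = 0 \<or> r = 1 \<or> r = 2 \<or> r = 3 \<or> r = 4 \<or> r = 5 \<or> r = 6 \<or> r = 7 \<or> r = 8 \<or> r = 9 \<or> r = 10 \<or> r = 11 \<or> r = 12 \<or> r = 13 \<or> r = 14 \<or> r = 15 \<or> r = 16 \<or> r = 17 \<or> r = 18 \<or> r = 19 \<or> r = 20 \<or> r = 21 \<or> r = 22 \<or> r = 23 \<or> r = 24 \<or> r = 25"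
  by arith

lemmas D = dvd26 nbs_def prv_def nxt_def thd_def toff_def tplus_def eq26 eq26b

lemma nb0z: "nbs m 0 = {26*m+25, 1, 9}"
  by (simp add: D; auto)
lemma nb0s: "0 < q \<Longrightarrow> nbs m (26*q) = {26*(q-1)+25, 26*q+1, 26*q+9}"
  by (simp add: D; auto)
lemma nb25m: "nbs m (26*m+25) = {26*m+24, 0, 26*m+22}"
  by (simp add: D; auto)
lemma nb25l: "q < m \<Longrightarrow> nbs m (26*q+25) = {26*q+24, 26*(q+1), 26*q+22}"
  by (simp add: D; auto)
lemma q0: "0 < q \<Longrightarrow> 26*(q-1)+25 = 26*q - (1::nat)" by simp

lemma nb1: "nbs m (26*q+1) = {26*q, 26*q+2, 26*q+4}"
  by (simp add: D; auto)
lemma nb2: "nbs m (26*q+2) = {26*q+1, 26*q+3, 26*q+7}"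
  by (simp add: D; auto)
lemma nb3: "nbs m (26*q+3) = {26*q+2, 26*q+4, 26*q+6}"
  by (simp add: D; auto)
lemma nb4: "nbs m (26*q+4) = {26*q+3, 26*q+5, 26*q+1}"
  by (simp add: D; auto)
lemma nb5: "nbs m (26*q+5) = {26*q+4, 26*q+6, 26*q+8}"
  by (simp add: D; auto)
lemma nb6: "nbs m (26*q+6) = {26*q+5, 26*q+7, 26*q+3}"
  by (simp add: D; auto)
lemma nb7: "nbs m (26*q+7) = {26*q+6, 26*q+8, 26*q+2}"
  by (simp add: D; auto)
lemma nb8: "nbs m (26*q+8) = {26*q+7, 26*q+17, 26*q+5}"
  by (simp add: D; auto)
lemma nb9: "nbs m (26*q+9) = {26*q, 26*q+10, 26*q+12}"
  by (simp add: D; auto)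
lemma nb10: "nbs m (26*q+10) = {26*q+9, 26*q+11, 26*q+15}"
  by (simp add: D; auto)
lemma nb11: "nbs m (26*q+11) = {26*q+10, 26*q+12, 26*q+14}"
  by (simp add: D; auto)
lemma nb12: "nbs m (26*q+12) = {26*q+11, 26*q+13, 26*q+9}"
  by (simp add: D; auto)
lemma nb13: "nbs m (26*q+13) = {26*q+12, 26*q+14, 26*q+16}"
  by (simp add: D; auto)
lemma nb14: "nbs m (26*q+14) = {26*q+13, 26*q+15, 26*q+11}"
  by (simp add: D; auto)
lemma nb15: "nbs m (26*q+15) = {26*q+14, 26*q+16, 26*q+10}"
  by (simp add: D; auto)
lemma nb16: "nbs m (26*q+16) = {26*q+15, 26*q+17, 26*q+13}"
  by (simp add: D; auto)
lemma nb17: "nbs m (26*q+17) = {26*q+16, 26*q+18, 26*q+8}"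
  by (simp add: D; auto)
lemma nb18: "nbs m (26*q+18) = {26*q+17, 26*q+19, 26*q+21}"
  by (simp add: D; auto)
lemma nb19: "nbs m (26*q+19) = {26*q+18, 26*q+20, 26*q+24}"
  by (simp add: D; auto)
lemma nb20: "nbs m (26*q+20) = {26*q+19, 26*q+21, 26*q+23}"
  by (simp add: D; auto)
lemma nb21: "nbs m (26*q+21) = {26*q+20, 26*q+22, 26*q+18}"
  by (simp add: D; auto)
lemma nb22: "nbs m (26*q+22) = {26*q+21, 26*q+23, 26*q+25}"
  by (simp add: D; auto)
lemma nb23: "nbs m (26*q+23) = {26*q+22, 26*q+24, 26*q+20}"
  by (simp add: D; auto)
lemma nb24: "nbs m (26*q+24) = {26*q+23, 26*q+25, 26*q+19}"
  by (simp add: D; auto)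
lemma sym1: "q \<le> m \<Longrightarrow> w \<in> nbs m (26*q+1) \<Longrightarrow> w \<le> 26*m+25 \<and> 26*q+1 \<in> nbs m w"
  using nb1[of m q] nb0z nb0s[of q m] nb2[of m q] nb4[of m q] by (cases "q = 0") auto
lemma sym2: "q \<le> m \<Longrightarrow> w \<in> nbs m (26*q+2) \<Longrightarrow> w \<le> 26*m+25 \<and> 26*q+2 \<in> nbs m w"
  using nb2[of m q] nb1[of m q] nb3[of m q] nb7[of m q] by auto
lemma sym3: "q \<le> m \<Longrightarrow> w \<in> nbs m (26*q+3) \<Longrightarrow> w \<le> 26*m+25 \<and> 26*q+3 \<in> nbs m w"
  using nb3[of m q] nb2[of m q] nb4[of m q] nb6[of m q] by auto
lemma sym4: "q \<le> m \<Longrightarrow> w \<in> nbs m (26*q+4) \<Longrightarrow> w \<le> 26*m+25 \<and> 26*q+4 \<in> nbs m w"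
  using nb4[of m q] nb3[of m q] nb5[of m q] nb1[of m q] by auto
lemma sym5: "q \<le> m \<Longrightarrow> w \<in> nbs m (26*q+5) \<Longrightarrow> w \<le> 26*m+25 \<and> 26*q+5 \<in> nbs m w"
  using nb5[of m q] nb4[of m q] nb6[of m q] nb8[of m q] by auto
lemma sym6: "q \<le> m \<Longrightarrow> w \<in> nbs m (26*q+6) \<Longrightarrow> w \<le> 26*m+25 \<and> 26*q+6 \<in> nbs m w"
  using nb6[of m q] nb5[of m q] nb7[of m q] nb3[of m q] by auto
lemma sym7: "q \<le> m \<Longrightarrow> w \<in> nbs m (26*q+7) \<Longrightarrow> w \<le> 26*m+25 \<and> 26*q+7 \<in> nbs m w"
  using nb7[of m q] nb6[of m q] nb8[of m q] nb2[of m q] by auto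
lemma sym8: "q \<le> m \<Longrightarrow> w \<in> nbs m (26*q+8) \<Longrightarrow> w \<le> 26*m+25 \<and> 26*q+8 \<in> nbs m w"
  using nb8[of m q] nb7[of m q] nb17[of m q] nb5[of m q] by auto
lemma sym9: "q \<le> m \<Longrightarrow> w \<in> nbs m (26*q+9) \<Longrightarrow> w \<le> 26*m+25 \<and> 26*q+9 \<in> nbs m w"
  using nb9[of m q] nb0z nb0s[of q m] nb10[of m q] nb12[of m q] by (cases "q = 0") auto
lemma sym10: "q \<le> m \<Longrightarrow> w \<in> nbs m (26*q+10) \<Longrightarrow> w \<le> 26*m+25 \<and> 26*q+10 \<in> nbs m w"
  using nb10[of m q] nb9[of m q] nb11[of m q] nb15[of m q] by auto
lemma sym11: "q \<le> m \<Longrightarrow> w \<in> nbs m (26*q+11) \<Longrightarrow> w \<le> 26*m+25 \<and> 26*q+11 \<in> nbs m w"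
  using nb11[of m q] nb10[of m q] nb12[of m q] nb14[of m q] by auto
lemma sym12: "q \<le> m \<Longrightarrow> w \<in> nbs m (26*q+12) \<Longrightarrow> w \<le> 26*m+25 \<and> 26*q+12 \<in> nbs m w"
  using nb12[of m q] nb11[of m q] nb13[of m q] nb9[of m q] by auto
lemma sym13: "q \<le> m \<Longrightarrow> w \<in> nbs m (26*q+13) \<Longrightarrow> w \<le> 26*m+25 \<and> 26*q+13 \<in> nbs m w"
  using nb13[of m q] nb12[of m q] nb14[of m q] nb16[of m q] by auto
lemma sym14: "q \<le> m \<Longrightarrow> w \<in> nbs m (26*q+14) \<Longrightarrow> w \<le> 26*m+25 \<and> 26*q+14 \<in> nbs m w"
  using nb14[of m q] nb13[of m q] nb15[of m q] nb11[of m q] by auto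
lemma sym15: "q \<le> m \<Longrightarrow> w \<in> nbs m (26*q+15) \<Longrightarrow> w \<le> 26*m+25 \<and> 26*q+15 \<in> nbs m w"
  using nb15[of m q] nb14[of m q] nb16[of m q] nb10[of m q] by auto
lemma sym16: "q \<le> m \<Longrightarrow> w \<in> nbs m (26*q+16) \<Longrightarrow> w \<le> 26*m+25 \<and> 26*q+16 \<in> nbs m w"
  using nb16[of m q] nb15[of m q] nb17[of m q] nb13[of m q] by auto
lemma sym17: "q \<le> m \<Longrightarrow> w \<in> nbs m (26*q+17) \<Longrightarrow> w \<le> 26*m+25 \<and> 26*q+17 \<in> nbs m w"
  using nb17[of m q] nb16[of m q] nb18[of m q] nb8[of m q] by auto
lemma sym18: "q \<le> m \<Longrightarrow> w \<in> nbs m (26*q+18) \<Longrightarrow> w \<le> 26*m+25 \<and> 26*q+18 \<in> nbs m w"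
  using nb18[of m q] nb17[of m q] nb19[of m q] nb21[of m q] by auto
lemma sym19: "q \<le> m \<Longrightarrow> w \<in> nbs m (26*q+19) \<Longrightarrow> w \<le> 26*m+25 \<and> 26*q+19 \<in> nbs m w"
  using nb19[of m q] nb18[of m q] nb20[of m q] nb24[of m q] by auto
lemma sym20: "q \<le> m \<Longrightarrow> w \<in> nbs m (26*q+20) \<Longrightarrow> w \<le> 26*m+25 \<and> 26*q+20 \<in> nbs m w"
  using nb20[of m q] nb19[of m q] nb21[of m q] nb23[of m q] by auto
lemma sym21: "q \<le> m \<Longrightarrow> w \<in> nbs m (26*q+21) \<Longrightarrow> w \<le> 26*m+25 \<and> 26*q+21 \<in> nbs m w"
  using nb21[of m q] nb20[of m q] nb22[of m q] nb18[of m q] by auto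
lemma sym22: "q \<le> m \<Longrightarrow> w \<in> nbs m (26*q+22) \<Longrightarrow> w \<le> 26*m+25 \<and> 26*q+22 \<in> nbs m w"
  using nb22[of m q] nb21[of m q] nb23[of m q] nb25m[of m] nb25l[of q m] by (cases "q = m") auto
lemma sym23: "q \<le> m \<Longrightarrow> w \<in> nbs m (26*q+23) \<Longrightarrow> w \<le> 26*m+25 \<and> 26*q+23 \<in> nbs m w"
  using nb23[of m q] nb22[of m q] nb24[of m q] nb20[of m q] by auto
lemma sym24: "q \<le> m \<Longrightarrow> w \<in> nbs m (26*q+24) \<Longrightarrow> w \<le> 26*m+25 \<and> 26*q+24 \<in> nbs m w"
  using nb24[of m q] nb23[of m q] nb25m[of m] nb25l[of q m] nb19[of m q] by (cases "q = m") auto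
lemma sym0z: "w \<in> nbs m 0 \<Longrightarrow> w \<le> 26*m+25 \<and> 0 \<in> nbs m w"
  using nb0z nb25m nb1[of m 0] nb9[of m 0] by auto
lemma sym0s: "0 < q \<Longrightarrow> q \<le> m \<Longrightarrow> w \<in> nbs m (26*q) \<Longrightarrow> w \<le> 26*m+25 \<and> 26*q \<in> nbs m w"
  using nb0s[of q m] nb25l[of "q-1" m] nb1[of m q] nb9[of m q] by auto
lemma sym25m: "w \<in> nbs m (26*m+25) \<Longrightarrow> w \<le> 26*m+25 \<and> 26*m+25 \<in> nbs m w"
  using nb25m nb0z nb24[of m m] nb22[of m m] by auto
lemma sym25l: "q < m \<Longrightarrow> w \<in> nbs m (26*q+25) \<Longrightarrow> w \<le> 26*m+25 \<and> 26*q+25 \<in> nbs m w"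
  using nb25l[of q m] nb0s[of "q+1" m] nb24[of m q] nb22[of m q] by auto
lemma vcases[consumes 1, case_names z r0 r1 r2 r3 r4 r5 r6 r7 r8 r9 r10 r11 r12 r13 r14 r15 r16 r17 r18 r19 r20 r21 r22 r23 r24 t r25]:
  fixes v m :: nat
  assumes vle: "v \<le> 26*m+25"
  and a0: "v = 0 \<Longrightarrow> thesis"
  and a1: "\<And>q. 0 < q \<Longrightarrow> q \<le> m \<Longrightarrow> v = 26*q \<Longrightarrow> thesis"
  and a2: "\<And>q. q \<le> m \<Longrightarrow> v = 26*q+1 \<Longrightarrow> thesis"
  and a3: "\<And>q. q \<le> m \<Longrightarrow> v = 26*q+2 \<Longrightarrow> thesis"
  and a4: "\<And>q. q \<le> m \<Longrightarrow> v = 26*q+3 \<Longrightarrow> thesis"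
  and a5: "\<And>q. q \<le> m \<Longrightarrow> v = 26*q+4 \<Longrightarrow> thesis"
  and a6: "\<And>q. q \<le> m \<Longrightarrow> v = 26*q+5 \<Longrightarrow> thesis"
  and a7: "\<And>q. q \<le> m \<Longrightarrow> v = 26*q+6 \<Longrightarrow> thesis"
  and a8: "\<And>q. q \<le> m \<Longrightarrow> v = 26*q+7 \<Longrightarrow> thesis"
  and a9: "\<And>q. q \<le> m \<Longrightarrow> v = 26*q+8 \<Longrightarrow> thesis"
  and a10: "\<And>q. q \<le> m \<Longrightarrow> v = 26*q+9 \<Longrightarrow> thesis"
  and a11: "\<And>q. q \<le> m \<Longrightarrow> v = 26*q+10 \<Longrightarrow> thesis"
  and a12: "\<And>q. q \<le> m \<Longrightarrow> v = 26*q+11 \<Longrightarrow> thesis"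
  and a13: "\<And>q. q \<le> m \<Longrightarrow> v = 26*q+12 \<Longrightarrow> thesis"
  and a14: "\<And>q. q \<le> m \<Longrightarrow> v = 26*q+13 \<Longrightarrow> thesis"
  and a15: "\<And>q. q \<le> m \<Longrightarrow> v = 26*q+14 \<Longrightarrow> thesis"
  and a16: "\<And>q. q \<le> m \<Longrightarrow> v = 26*q+15 \<Longrightarrow> thesis"
  and a17: "\<And>q. q \<le> m \<Longrightarrow> v = 26*q+16 \<Longrightarrow> thesis"
  and a18: "\<And>q. q \<le> m \<Longrightarrow> v = 26*q+17 \<Longrightarrow> thesis"
  and a19: "\<And>q. q \<le> m \<Longrightarrow> v = 26*q+18 \<Longrightarrow> thesis"
  and a20: "\<And>q. q \<le> m \<Longrightarrow> v = 26*q+19 \<Longrightarrow> thesis"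
  and a21: "\<And>q. q \<le> m \<Longrightarrow> v = 26*q+20 \<Longrightarrow> thesis"
  and a22: "\<And>q. q \<le> m \<Longrightarrow> v = 26*q+21 \<Longrightarrow> thesis"
  and a23: "\<And>q. q \<le> m \<Longrightarrow> v = 26*q+22 \<Longrightarrow> thesis"
  and a24: "\<And>q. q \<le> m \<Longrightarrow> v = 26*q+23 \<Longrightarrow> thesis"
  and a25: "\<And>q. q \<le> m \<Longrightarrow> v = 26*q+24 \<Longrightarrow> thesis"
  and a26: "v = 26*m+25 \<Longrightarrow> thesis"
  and a27: "\<And>q. q < m \<Longrightarrow> v = 26*q+25 \<Longrightarrow> thesis"
  shows thesis
proof -
  obtain q r where v: "v = 26*q + r" and r: "r < 26"
    using mod_less_divisor[of 26 v] div_mult_mod_eq[of v 26] by (metis mult.commute zero_less_numeral)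
  have q: "q \<le> m" using vle v r by linarith
  show thesis using less26[OF r]
  proof (elim disjE)
    assume "r = 0" then show thesis using a0 a1[of q] v q by (cases "q = 0") auto
  next
    assume "r = 1" then show thesis using a2[of q] v q by auto
  next
    assume "r = 2" then show thesis using a3[of q] v q by auto
  next
    assume "r = 3" then show thesis using a4[of q] v q by auto
  next
    assume "r = 4" then show thesis using a5[of q] v q by auto
  next
    assume "r = 5" then show thesis using a6[of q] v q by auto
  next
    assume "r = 6" then show thesis using a7[of q] v q by auto
  next
    assume "r = 7" then show thesis using a8[of q] v q by auto
  next
    assume "r = 8" then show thesis using a9[of q] v q by auto
  next
    assume "r = 9" then show thesis using a10[of q] v q by auto
  next
    assume "r = 10" then show thesis using a11[of q] v q by auto
  next
    assume "r = 11" then show thesis using a12[of q] v q by auto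
  next
    assume "r = 12" then show thesis using a13[of q] v q by auto
  next
    assume "r = 13" then show thesis using a14[of q] v q by auto
  next
    assume "r = 14" then show thesis using a15[of q] v q by auto
  next
    assume "r = 15" then show thesis using a16[of q] v q by auto
  next
    assume "r = 16" then show thesis using a17[of q] v q by auto
  next
    assume "r = 17" then show thesis using a18[of q] v q by auto
  next
    assume "r = 18" then show thesis using a19[of q] v q by auto
  next
    assume "r = 19" then show thesis using a20[of q] v q by auto
  next
    assume "r = 20" then show thesis using a21[of q] v q by auto
  next
    assume "r = 21" then show thesis using a22[of q] v q by auto
  next
    assume "r = 22" then show thesis using a23[of q] v q by auto
  next
    assume "r = 23" then show thesis using a24[of q] v q by auto
  next
    assume "r = 24" then show thesis using a25[of q] v q by auto
  next
    assume "r = 25" then show thesis using a26 a27[of q] v q by (cases "q = m") auto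
  qed
qed

lemma nbs_card:
  fixes v m :: nat
  assumes vle: "v \<le> 26*m+25"
  shows "card (nbs m v) = 3 \<and> v \<notin> nbs m v"
using vle proof (cases rule: vcases)
  case (z) then show ?thesis using nb0z by simp
next
  case (r0 q) then show ?thesis using nb0s[of q m] by (auto simp: card_insert_if)
next
  case (r1 q) then show ?thesis using nb1[of m q] by simp
next
  case (r2 q) then show ?thesis using nb2[of m q] by simp
next
  case (r3 q) then show ?thesis using nb3[of m q] by simp
next
  case (r4 q) then show ?thesis using nb4[of m q] by simp
next
  case (r5 q) then show ?thesis using nb5[of m q] by simp
next
  case (r6 q) then show ?thesis using nb6[of m q] by simp
next
  case (r7 q) then show ?thesis using nb7[of m q] by simp
next
  case (r8 q) then show ?thesis using nb8[of m q] by simp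
next
  case (r9 q) then show ?thesis using nb9[of m q] by simp
next
  case (r10 q) then show ?thesis using nb10[of m q] by simp
next
  case (r11 q) then show ?thesis using nb11[of m q] by simp
next
  case (r12 q) then show ?thesis using nb12[of m q] by simp
next
  case (r13 q) then show ?thesis using nb13[of m q] by simp
next
  case (r14 q) then show ?thesis using nb14[of m q] by simp
next
  case (r15 q) then show ?thesis using nb15[of m q] by simp
next
  case (r16 q) then show ?thesis using nb16[of m q] by simp
next
  case (r17 q) then show ?thesis using nb17[of m q] by simp
next
  case (r18 q) then show ?thesis using nb18[of m q] by simp
next
  case (r19 q) then show ?thesis using nb19[of m q] by simp
next
  case (r20 q) then show ?thesis using nb20[of m q] by simp
next
  case (r21 q) then show ?thesis using nb21[of m q] by simp
next
  case (r22 q) then show ?thesis using nb22[of m q] by simp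
next
  case (r23 q) then show ?thesis using nb23[of m q] by simp
next
  case (r24 q) then show ?thesis using nb24[of m q] by simp
next
  case (t) then show ?thesis using nb25m[of m] by simp
next
  case (r25 q) then show ?thesis using nb25l[of q m] by simp
qed

definition pend :: "nat \<Rightarrow> nat \<Rightarrow> nat set" where "pend j b = {26*j+b..<26*j+b+8}"
definition fo :: "nat \<Rightarrow> nat" where
 "fo r = [9,3,5,3,0,3,0,0,9,3,5,3,0,3,0,0,0,0,3,5,3,0,3,0,0,0] ! r"

lemma nbs_sym:
  fixes v m :: nat
  assumes vle: "v \<le> 26*m+25" and w: "w \<in> nbs m v"
  shows "w \<le> 26*m+25 \<and> v \<in> nbs m w"
  using vle proof (cases rule: vcases)
  case (z) then show ?thesis using sym0z w by simp
next
  case (r0 q) then show ?thesis using sym0s[of q m] w by simp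
next
  case (r1 q) then show ?thesis using sym1[of q m] w by simp
next
  case (r2 q) then show ?thesis using sym2[of q m] w by simp
next
  case (r3 q) then show ?thesis using sym3[of q m] w by simp
next
  case (r4 q) then show ?thesis using sym4[of q m] w by simp
next
  case (r5 q) then show ?thesis using sym5[of q m] w by simp
next
  case (r6 q) then show ?thesis using sym6[of q m] w by simp
next
  case (r7 q) then show ?thesis using sym7[of q m] w by simp
next
  case (r8 q) then show ?thesis using sym8[of q m] w by simp
next
  case (r9 q) then show ?thesis using sym9[of q m] w by simp
next
  case (r10 q) then show ?thesis using sym10[of q m] w by simp
next
  case (r11 q) then show ?thesis using sym11[of q m] w by simp
next
  case (r12 q) then show ?thesis using sym12[of q m] w by simp
next
  case (r13 q) then show ?thesis using sym13[of q m] w by simp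
next
  case (r14 q) then show ?thesis using sym14[of q m] w by simp
next
  case (r15 q) then show ?thesis using sym15[of q m] w by simp
next
  case (r16 q) then show ?thesis using sym16[of q m] w by simp
next
  case (r17 q) then show ?thesis using sym17[of q m] w by simp
next
  case (r18 q) then show ?thesis using sym18[of q m] w by simp
next
  case (r19 q) then show ?thesis using sym19[of q m] w by simp
next
  case (r20 q) then show ?thesis using sym20[of q m] w by simp
next
  case (r21 q) then show ?thesis using sym21[of q m] w by simp
next
  case (r22 q) then show ?thesis using sym22[of q m] w by simp
next
  case (r23 q) then show ?thesis using sym23[of q m] w by simp
next
  case (r24 q) then show ?thesis using sym24[of q m] w by simp
next
  case (t) then show ?thesis using sym25m w by simp
next
  case (r25 q) then show ?thesis using sym25l[of q m] w by simp
qed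
lemma nbs_par:
  fixes v m :: nat
  assumes vle: "v \<le> 26*m+25"
  shows "w \<in> nbs m v \<longrightarrow> (even v \<longleftrightarrow> odd w)"
using vle proof (cases rule: vcases)
  case (z) then show ?thesis using nb0z by auto
next
  case (r0 q) then show ?thesis using nb0s[of q m] by auto
next
  case (r1 q) then show ?thesis using nb1[of m q] by auto
next
  case (r2 q) then show ?thesis using nb2[of m q] by auto
next
  case (r3 q) then show ?thesis using nb3[of m q] by auto
next
  case (r4 q) then show ?thesis using nb4[of m q] by auto
next
  case (r5 q) then show ?thesis using nb5[of m q] by auto
next
  case (r6 q) then show ?thesis using nb6[of m q] by auto
next
  case (r7 q) then show ?thesis using nb7[of m q] by auto
next
  case (r8 q) then show ?thesis using nb8[of m q] by auto
next
  case (r9 q) then show ?thesis using nb9[of m q] by auto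
next
  case (r10 q) then show ?thesis using nb10[of m q] by auto
next
  case (r11 q) then show ?thesis using nb11[of m q] by auto
next
  case (r12 q) then show ?thesis using nb12[of m q] by auto
next
  case (r13 q) then show ?thesis using nb13[of m q] by auto
next
  case (r14 q) then show ?thesis using nb14[of m q] by auto
next
  case (r15 q) then show ?thesis using nb15[of m q] by auto
next
  case (r16 q) then show ?thesis using nb16[of m q] by auto
next
  case (r17 q) then show ?thesis using nb17[of m q] by auto
next
  case (r18 q) then show ?thesis using nb18[of m q] by auto
next
  case (r19 q) then show ?thesis using nb19[of m q] by auto
next
  case (r20 q) then show ?thesis using nb20[of m q] by auto
next
  case (r21 q) then show ?thesis using nb21[of m q] by auto
next
  case (r22 q) then show ?thesis using nb22[of m q] by auto
next
  case (r23 q) then show ?thesis using nb23[of m q] by auto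
next
  case (r24 q) then show ?thesis using nb24[of m q] by auto
next
  case (t) then show ?thesis using nb25m[of m] by auto
next
  case (r25 q) then show ?thesis using nb25l[of q m] by auto
qed
lemma nbs_pend:
  fixes v m :: nat
  assumes vle: "v \<le> 26*m+25"
  shows "c \<in> nbs m v \<longrightarrow> b \<in> {1,9,18} \<longrightarrow> b \<le> v mod 26 \<longrightarrow> v mod 26 < b+8 \<longrightarrow> c \<in> pend (v div 26) b \<or> c mod 26 = 0 \<or> c mod 26 = 17"
using vle proof (cases rule: vcases)
  case (z) then show ?thesis using nb0z by (auto simp: pend_def)
next
  case (r0 q) then show ?thesis using nb0s[of q m] by (auto simp: pend_def)
next
  case (r1 q) then show ?thesis using nb1[of m q] by (auto simp: pend_def)
next
  case (r2 q) then show ?thesis using nb2[of m q] by (auto simp: pend_def)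
next
  case (r3 q) then show ?thesis using nb3[of m q] by (auto simp: pend_def)
next
  case (r4 q) then show ?thesis using nb4[of m q] by (auto simp: pend_def)
next
  case (r5 q) then show ?thesis using nb5[of m q] by (auto simp: pend_def)
next
  case (r6 q) then show ?thesis using nb6[of m q] by (auto simp: pend_def)
next
  case (r7 q) then show ?thesis using nb7[of m q] by (auto simp: pend_def)
next
  case (r8 q) then show ?thesis using nb8[of m q] by (auto simp: pend_def)
next
  case (r9 q) then show ?thesis using nb9[of m q] by (auto simp: pend_def)
next
  case (r10 q) then show ?thesis using nb10[of m q] by (auto simp: pend_def)
next
  case (r11 q) then show ?thesis using nb11[of m q] by (auto simp: pend_def)
next
  case (r12 q) then show ?thesis using nb12[of m q] by (auto simp: pend_def)
next
  case (r13 q) then show ?thesis using nb13[of m q] by (auto simp: pend_def)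
next
  case (r14 q) then show ?thesis using nb14[of m q] by (auto simp: pend_def)
next
  case (r15 q) then show ?thesis using nb15[of m q] by (auto simp: pend_def)
next
  case (r16 q) then show ?thesis using nb16[of m q] by (auto simp: pend_def)
next
  case (r17 q) then show ?thesis using nb17[of m q] by (auto simp: pend_def)
next
  case (r18 q) then show ?thesis using nb18[of m q] by (auto simp: pend_def)
next
  case (r19 q) then show ?thesis using nb19[of m q] by (auto simp: pend_def)
next
  case (r20 q) then show ?thesis using nb20[of m q] by (auto simp: pend_def)
next
  case (r21 q) then show ?thesis using nb21[of m q] by (auto simp: pend_def)
next
  case (r22 q) then show ?thesis using nb22[of m q] by (auto simp: pend_def)
next
  case (r23 q) then show ?thesis using nb23[of m q] by (auto simp: pend_def)
next
  case (r24 q) then show ?thesis using nb24[of m q] by (auto simp: pend_def)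
next
  case (t) then show ?thesis using nb25m[of m] by (auto simp: pend_def)
next
  case (r25 q) then show ?thesis using nb25l[of q m] by (auto simp: pend_def)
qed
lemma nbs_fwd:
  fixes v m :: nat
  assumes vle: "v \<le> 26*m+25"
  shows "w \<in> nbs m v \<longrightarrow> v < w \<longrightarrow> w = v+1 \<or> (v = 0 \<and> w = 26*m+25) \<or> (w = v + fo (v mod 26) \<and> 3 \<le> fo (v mod 26) \<and> v mod 26 + fo (v mod 26) \<le> 25)"
using vle proof (cases rule: vcases)
  case (z) then show ?thesis using nb0z by (auto simp: fo_def)
next
  case (r0 q) then show ?thesis using nb0s[of q m] by (auto simp: fo_def)
next
  case (r1 q) then show ?thesis using nb1[of m q] by (auto simp: fo_def)
next
  case (r2 q) then show ?thesis using nb2[of m q] by (auto simp: fo_def)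
next
  case (r3 q) then show ?thesis using nb3[of m q] by (auto simp: fo_def)
next
  case (r4 q) then show ?thesis using nb4[of m q] by (auto simp: fo_def)
next
  case (r5 q) then show ?thesis using nb5[of m q] by (auto simp: fo_def)
next
  case (r6 q) then show ?thesis using nb6[of m q] by (auto simp: fo_def)
next
  case (r7 q) then show ?thesis using nb7[of m q] by (auto simp: fo_def)
next
  case (r8 q) then show ?thesis using nb8[of m q] by (auto simp: fo_def)
next
  case (r9 q) then show ?thesis using nb9[of m q] by (auto simp: fo_def)
next
  case (r10 q) then show ?thesis using nb10[of m q] by (auto simp: fo_def)
next
  case (r11 q) then show ?thesis using nb11[of m q] by (auto simp: fo_def)
next
  case (r12 q) then show ?thesis using nb12[of m q] by (auto simp: fo_def)
next
  case (r13 q) then show ?thesis using nb13[of m q] by (auto simp: fo_def)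
next
  case (r14 q) then show ?thesis using nb14[of m q] by (auto simp: fo_def)
next
  case (r15 q) then show ?thesis using nb15[of m q] by (auto simp: fo_def)
next
  case (r16 q) then show ?thesis using nb16[of m q] by (auto simp: fo_def)
next
  case (r17 q) then show ?thesis using nb17[of m q] by (auto simp: fo_def)
next
  case (r18 q) then show ?thesis using nb18[of m q] by (auto simp: fo_def)
next
  case (r19 q) then show ?thesis using nb19[of m q] by (auto simp: fo_def)
next
  case (r20 q) then show ?thesis using nb20[of m q] by (auto simp: fo_def)
next
  case (r21 q) then show ?thesis using nb21[of m q] by (auto simp: fo_def)
next
  case (r22 q) then show ?thesis using nb22[of m q] by (auto simp: fo_def)
next
  case (r23 q) then show ?thesis using nb23[of m q] by (auto simp: fo_def)
next
  case (r24 q) then show ?thesis using nb24[of m q] by (auto simp: fo_def)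
next
  case (t) then show ?thesis using nb25m[of m] by (auto simp: fo_def)
next
  case (r25 q) then show ?thesis using nb25l[of q m] by (auto simp: fo_def)
qed


definition pt :: "real \<Rightarrow> real \<Rightarrow> real^2" where
  "pt x y = (\<chi> i. if i = 1 then x else y)"

lemma pt_nth[simp]: "pt x y $ 1 = x" "pt x y $ 2 = y"
  by (simp_all add: pt_def)

lemma pt_eq[simp]: "pt x y = pt x' y' \<longleftrightarrow> x = x' \<and> y = y'"
  by (metis pt_nth)

lemma continuous_on_pt[continuous_intros]:
  "continuous_on S f \<Longrightarrow> continuous_on S g \<Longrightarrow> continuous_on S (\<lambda>t. pt (f t) (g t))"
  unfolding pt_def
  apply (intro continuous_on_vec_lambda)
  subgoal for i by (cases "i = 1") auto
  done

definition lo :: "nat set \<Rightarrow> real" where "lo e = real (Min e)"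
definition hi :: "nat set \<Rightarrow> real" where "hi e = real (Max e)"
definition xx :: "nat set \<Rightarrow> real \<Rightarrow> real" where "xx e t = lo e + t * (hi e - lo e)"
definition gam :: "(nat set \<Rightarrow> bool) \<Rightarrow> nat set \<Rightarrow> real \<Rightarrow> real^2" where
  "gam pg e t = pt (xx e t) ((if pg e then 1 else -1) * ((xx e t - lo e) * (hi e - xx e t)))"

lemma lohi: "u < v \<Longrightarrow> lo {u,v} = real u \<and> hi {u,v} = real v"
proof -
  assume "u < v"
  then have "Min {u,v} = u" by (intro Min_eqI) auto
  moreover have "Max {u,v} = v" using \<open>u < v\<close> by (intro Max_eqI) auto
  ultimately show ?thesis by (simp add: lo_def hi_def)
qed

lemma gam_image:
  assumes "z \<in> path_image (gam pg e)" "lo e \<le> hi e"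
  shows "\<exists>x. lo e \<le> x \<and> x \<le> hi e \<and> z = pt x ((if pg e then 1 else -1) * ((x - lo e) * (hi e - x)))"
proof -
  obtain t where t: "t \<in> {0..1}" "z = gam pg e t" using assms(1) by (auto simp: path_image_def)
  have d: "0 \<le> hi e - lo e" using assms(2) by simp
  have t0: "0 \<le> t" "t \<le> 1" using t(1) by auto
  have "0 \<le> t * (hi e - lo e)" using d t0 by simp
  moreover have "t * (hi e - lo e) \<le> hi e - lo e" using mult_left_le_one_le[OF d t0] .
  ultimately have "lo e \<le> xx e t" "xx e t \<le> hi e" by (simp_all add: xx_def)
  then show ?thesis using t by (auto simp: gam_def)
qed

lemma gam_arc:
  assumes "lo e < hi e"
  shows "arc (gam pg e)"
  unfolding arc_def path_def
proof
  show "continuous_on {0..1} (gam pg e)" unfolding gam_def xx_def by (intro continuous_intros)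
  show "inj_on (gam pg e) {0..1}"
  proof (rule inj_onI)
    fix s t assume "gam pg e s = gam pg e t"
    then have "xx e s = xx e t" unfolding gam_def by simp
    then show "s = t" using assms by (simp add: xx_def)
  qed
qed

lemma gam_start: "pathstart (gam pg e) = pt (lo e) 0"
  by (simp add: pathstart_def gam_def xx_def)
lemma gam_finish: "pathfinish (gam pg e) = pt (hi e) 0"
  by (simp add: pathfinish_def gam_def xx_def)

lemma book_planar:
  fixes V :: "nat set" and E :: "nat set set" and pg :: "nat set \<Rightarrow> bool"
  assumes edges: "\<forall>e\<in>E. \<exists>u v. u < v \<and> e = {u,v}"
  and nocross: "\<And>a b c d. {a,b} \<in> E \<Longrightarrow> {c,d} \<in> E \<Longrightarrow> a < c \<Longrightarrow> c < b \<Longrightarrow> b < d \<Longrightarrow> pg {a,b} \<noteq> pg {c,d}"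
  shows "planar (V,E)"
  unfolding planar_def fst_conv snd_conv
proof (intro exI conjI ballI impI)
  let ?p = "\<lambda>v::nat. pt (real v) 0"
  show "inj_on ?p V" by (auto simp: inj_on_def)
  fix e assume e: "e \<in> E"
  then obtain u v where uv: "u < v" "e = {u,v}" using edges by blast
  have lh: "lo e = real u" "hi e = real v" using lohi[OF uv(1)] uv(2) by auto
  show "arc (gam pg e)" by (rule gam_arc) (simp add: lh uv(1))
  show "{pathstart (gam pg e), pathfinish (gam pg e)} = ?p ` e"
    by (simp add: gam_start gam_finish uv(2) lohi[OF uv(1)])
  show "path_image (gam pg e) \<inter> ?p ` V \<subseteq> ?p ` e"
  proof
    fix z assume z: "z \<in> path_image (gam pg e) \<inter> ?p ` V"
    obtain x where x: "lo e \<le> x" "x \<le> hi e" "z = pt x ((if pg e then 1 else -1) * ((x - lo e) * (hi e - x)))"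
      using gam_image[of z pg e] z lh uv by auto
    obtain w where "z = ?p w" using z by auto
    then have "(x - lo e) * (hi e - x) = 0" using x(3) by (auto split: if_splits)
    then have "x = lo e \<or> x = hi e" by auto
    then show "z \<in> ?p ` e" using x(3) lh uv by auto
  qed
next
  let ?p = "\<lambda>v::nat. pt (real v) 0"
  fix e e' assume e: "e \<in> E" and e': "e' \<in> E" and ne: "e \<noteq> e'"
  obtain u v where uv: "u < v" "e = {u,v}" using edges e by blast
  obtain u' v' where uv': "u' < v'" "e' = {u',v'}" using edges e' by blast
  have lh: "lo e = real u" "hi e = real v" using lohi[OF uv(1)] uv(2) by auto
  have lh': "lo e' = real u'" "hi e' = real v'" using lohi[OF uv'(1)] uv'(2) by auto
  show "path_image (gam pg e) \<inter> path_image (gam pg e') \<subseteq> ?p ` (e \<inter> e')"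
  proof
    fix z assume z: "z \<in> path_image (gam pg e) \<inter> path_image (gam pg e')"
    obtain x where x: "real u \<le> x" "x \<le> real v" "z = pt x ((if pg e then 1 else -1) * ((x - real u) * (real v - x)))"
      using gam_image[of z pg e] z lh uv by auto
    obtain x' where x': "real u' \<le> x'" "x' \<le> real v'" "z = pt x' ((if pg e' then 1 else -1) * ((x' - real u') * (real v' - x')))"
      using gam_image[of z pg e'] z lh' uv' by auto
    have xx': "x' = x" using x(3) x'(3) by simp
    define y where "y = z $ 2"
    have y1: "y = (if pg e then 1 else -1) * ((x - real u) * (real v - x))" using x(3) y_def by simp
    have y2: "y = (if pg e' then 1 else -1) * ((x - real u') * (real v' - x))" using x'(3) xx' y_def by simp
    show "z \<in> ?p ` (e \<inter> e')"
    proof (cases "y = 0")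
      case True
      then have a: "x = real u \<or> x = real v" using y1 by (auto split: if_splits)
      have b: "x = real u' \<or> x = real v'" using y2 True by (auto split: if_splits)
      have zz: "z = pt x 0" using x(3) y1 True by (auto split: if_splits)
      from a b obtain c where "c \<in> e \<inter> e'" "x = real c" using uv uv' by auto
      then show ?thesis using zz by auto
    next
      case False
      have p1: "0 < (x - real u) * (real v - x)"
      proof -
        have "(x - real u) * (real v - x) \<noteq> 0" using False y1 by auto
        moreover have "0 \<le> (x - real u) * (real v - x)" using x by auto
        ultimately show ?thesis by linarith
      qed
      have p2: "0 < (x - real u') * (real v' - x)"
      proof -
        have "(x - real u') * (real v' - x) \<noteq> 0" using False y2 by auto
        moreover have "0 \<le> (x - real u') * (real v' - x)" using x' xx' by auto
        ultimately show ?thesis by linarith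
      qed
      have xin: "real u < x" "x < real v" "real u' < x" "x < real v'"
        using p1 p2 x x' xx' by (auto simp: zero_less_mult_iff)
      have pgeq: "pg e = pg e'"
        using y1 y2 p1 p2 by (auto split: if_splits)
      have eqp: "(x - real u) * (real v - x) = (x - real u') * (real v' - x)"
        using y1 y2 pgeq by (auto split: if_splits)
      have nc1: "\<not> (u < u' \<and> u' < v \<and> v < v')" using nocross[of u v u' v'] e e' uv uv' pgeq by auto
      have nc2: "\<not> (u' < u \<and> u < v' \<and> v' < v)" using nocross[of u' v' u v] e e' uv uv' pgeq by auto
      have "u \<noteq> u' \<or> v \<noteq> v'" using ne uv uv' by auto
      have False
      proof (cases u u' rule: linorder_cases)
        case less
        then have "u' < v" using xin by linarith
        then have "v' \<le> v" using nc1 less by linarith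
        have "x - real u' < x - real u" using less by simp
        moreover have "real v' - x \<le> real v - x" using \<open>v' \<le> v\<close> by simp
        ultimately have "(x - real u') * (real v' - x) < (x - real u) * (real v - x)"
          using xin by (intro mult_less_le_imp_less) auto
        then show False using eqp by simp
      next
        case equal
        then have "v \<noteq> v'" using \<open>u \<noteq> u' \<or> v \<noteq> v'\<close> by auto
        then have "real v - x \<noteq> real v' - x" by simp
        then show False using eqp equal xin by simp
      next
        case greater
        then have "u < v'" using xin by linarith
        then have "v \<le> v'" using nc2 greater by linarith
        have "x - real u < x - real u'" using greater by simp
        moreover have "real v - x \<le> real v' - x" using \<open>v \<le> v'\<close> by simp
        ultimately have "(x - real u) * (real v - x) < (x - real u') * (real v' - x)"
          using xin by (intro mult_less_le_imp_less) auto
        then show False using eqp by simp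
      qed
      then show ?thesis ..
    qed
  qed
qed


lemma reach_refl: "reach E u u" by (simp add: reach_def)
lemma reach_edge: "{u,w} \<in> E \<Longrightarrow> reach E u w" by (simp add: reach_def r_into_rtranclp)
lemma reach_trans: "reach E u v \<Longrightarrow> reach E v w \<Longrightarrow> reach E u w"
  unfolding reach_def by (rule rtranclp_trans)
lemma reach_sym: "reach E u v \<Longrightarrow> reach E v u"
proof -
  have "symp (\<lambda>u v. {u, v} \<in> E)" by (auto simp: symp_def insert_commute)
  then show "reach E u v \<Longrightarrow> reach E v u" unfolding reach_def by (metis sympD symp_rtranclp)
qed

lemma st_down:
  fixes v b :: nat and E :: "nat set set"
  assumes "\<And>v. 0 < v \<Longrightarrow> v \<le> b \<Longrightarrow> \<exists>w<v. {w,v} \<in> E"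
  shows "v \<le> b \<Longrightarrow> reach E v 0"
proof (induction v rule: less_induct)
  case (less v)
  show ?case
  proof (cases "v = 0")
    case True then show ?thesis by (simp add: reach_refl)
  next
    case False
    then obtain w where w: "w < v" "{w,v} \<in> E" using assms less.prems by auto
    have "w \<le> b" using w(1) less.prems by simp
    then have "reach E w 0" by (rule less.IH[OF w(1)])
    moreover have "reach E v w" using w(2) by (intro reach_edge) (simp add: insert_commute)
    ultimately show ?thesis by (meson reach_trans)
  qed
qed

lemma st_up:
  fixes v a t :: nat and E :: "nat set set"
  assumes "\<And>v. a \<le> v \<Longrightarrow> v < t \<Longrightarrow> \<exists>w. v < w \<and> w \<le> t \<and> {v,w} \<in> E"
  shows "a \<le> v \<Longrightarrow> v \<le> t \<Longrightarrow> reach E v t"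
proof (induction "t - v" arbitrary: v rule: less_induct)
  case less
  show ?case
  proof (cases "v = t")
    case True then show ?thesis by (simp add: reach_refl)
  next
    case False
    then have "v < t" using less.prems by simp
    then obtain w where w: "v < w" "w \<le> t" "{v,w} \<in> E" using assms less.prems by blast
    have "t - w < t - v" "a \<le> w" using w less.prems False by auto
    then have "reach E w t" using less.hyps[of w] w(2) by blast
    moreover have "reach E v w" using w(3) by (intro reach_edge)
    ultimately show ?thesis by (meson reach_trans)
  qed
qed

lemma conn_root:
  assumes "V \<noteq> {}" "\<And>v. v \<in> V \<Longrightarrow> reach E v r"
  shows "connected_graph (V, E)"
  unfolding connected_graph_def fst_conv snd_conv
proof (intro conjI ballI)
  fix u v assume "u \<in> V" "v \<in> V"
  then have "reach E u r" "reach E v r" using assms(2) by auto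
  then show "reach E u v" by (meson reach_sym reach_trans)
qed (use assms in auto)

lemma st_two_connected:
  fixes E :: "nat set set" and n :: nat
  assumes n: "2 < n"
  and top: "{0, n-1} \<in> E"
  and low: "\<And>v. 0 < v \<Longrightarrow> v < n-1 \<Longrightarrow> \<exists>w<v. {w,v} \<in> E"
  and high: "\<And>v. 0 < v \<Longrightarrow> v < n-1 \<Longrightarrow> \<exists>w. v < w \<and> w < n \<and> {v,w} \<in> E"
  shows "two_connected ({..<n}, E)"
  unfolding two_connected_def fst_conv
proof (intro conjI ballI)
  show "2 < card {..<n}" using n by simp
  show "connected_graph ({..<n}, E)"
  proof (rule conn_root[where r = 0])
    show "{..<n} \<noteq> {}" using n by auto
    fix v assume v: "v \<in> {..<n}"
    show "reach E v 0"
    proof (cases "v = n-1")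
      case True then show ?thesis using top by (intro reach_edge) (simp add: insert_commute)
    next
      case False
      then show ?thesis using v by (intro st_down[where b = "n-2"]) (use low in auto)
    qed
  qed
  fix x assume x: "x \<in> {..<n}"
  define E' where "E' = {e \<in> E. x \<notin> e}"
  have dv: "delete_vertex ({..<n}, E) x = ({..<n} - {x}, E')"
    by (simp add: delete_vertex_def E'_def)
  have ne: "{..<n} - {x} \<noteq> {}"
  proof -
    have "{0, 1} \<subseteq> {..<n}" using n by auto
    then show ?thesis by auto
  qed
  show "connected_graph (delete_vertex ({..<n}, E) x)"
    unfolding dv
  proof (cases "x = 0")
    case True
    show "connected_graph ({..<n} - {x}, E')"
    proof (rule conn_root[OF ne, where r = "n-1"])
      fix v assume v: "v \<in> {..<n} - {x}"
      show "reach E' v (n-1)"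
      proof (rule st_up[where a = 1])
        fix u assume u: "1 \<le> u" "u < n-1"
        then obtain w where "u < w" "w < n" "{u,w} \<in> E" using high[of u] by auto
        then show "\<exists>w. u < w \<and> w \<le> n - 1 \<and> {u, w} \<in> E'" using u True by (auto simp: E'_def)
      qed (use v True in auto)
    qed
  next
    case False
    then have x0: "x \<noteq> 0" .
    show "connected_graph ({..<n} - {x}, E')"
    proof (rule conn_root[OF ne, where r = 0])
      fix v assume v: "v \<in> {..<n} - {x}"
      have down: "reach E' u 0" if "u < x" for u
      proof (rule st_down[where b = "x - 1"])
        fix u' assume u': "0 < u'" "u' \<le> x - 1"
        have "u' < n - 1" using u' x that by auto
        then obtain w where "w < u'" "{w,u'} \<in> E" using low[of u'] u' by blast
        then show "\<exists>w<u'. {w, u'} \<in> E'" using u' by (auto simp: E'_def)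
      qed (use that in auto)
      show "reach E' v 0"
      proof (cases "v < x")
        case True then show ?thesis by (rule down)
      next
        case False
        then have vx: "x < v" using v by auto
        then have xn: "x < n - 1" using v by auto
        have "reach E' v (n-1)"
        proof (rule st_up[where a = "x+1"])
          fix u assume u: "x+1 \<le> u" "u < n-1"
          have "0 < u" using u by simp
          then obtain w where "u < w" "w < n" "{u,w} \<in> E" using high[of u] u by blast
          then show "\<exists>w. u < w \<and> w \<le> n - 1 \<and> {u, w} \<in> E'" using u by (auto simp: E'_def)
        qed (use vx v in auto)
        moreover have "reach E' (n-1) 0"
          using top x0 xn by (intro reach_edge) (auto simp: E'_def insert_commute)
        ultimately show ?thesis by (rule reach_trans)
      qed
    qed
  qed
qed


lemma no_lambda:
  fixes V :: "'a set" and E :: "'a set set" and S :: "'a set" and I :: "'i set" and P :: "'i \<Rightarrow> 'a set"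
  assumes fin: "finite V" and SV: "S \<subseteq> V" and finI: "finite I"
  and PV: "\<And>i. i \<in> I \<Longrightarrow> P i \<subseteq> V - S"
  and disj: "\<And>i j. i \<in> I \<Longrightarrow> j \<in> I \<Longrightarrow> i \<noteq> j \<Longrightarrow> P i \<inter> P j = {}"
  and closed: "\<And>i a b. {a,b} \<in> E \<Longrightarrow> i \<in> I \<Longrightarrow> a \<in> P i \<Longrightarrow> b \<in> P i \<union> S"
  and big: "2 * card S < (\<Sum>i\<in>I. card (P i) mod 3)"
  shows "\<not> has_Lambda_factor (V, E)"
proof
  assume "has_Lambda_factor (V, E)"
  then obtain F where FE: "F \<subseteq> E" and H: "\<And>v. v \<in> V \<Longrightarrow> \<exists>a b c.
      a \<noteq> b \<and> b \<noteq> c \<and> a \<noteq> c \<and> v \<in> {a, b, c} \<and>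
      {w\<in>V. reach F v w} = {a, b, c} \<and>
      {e\<in>F. e \<subseteq> {a, b, c}} = {{a, b}, {b, c}}"
    unfolding has_Lambda_factor_def by auto
  define T where "T v = {w\<in>V. reach F v w}" for v
  have TV: "T v \<subseteq> V" for v by (auto simp: T_def)
  have finT: "finite (T v)" for v using TV fin finite_subset by blast
  have T1: "v \<in> T v" "card (T v) = 3" if "v \<in> V" for v
    using H[OF that] unfolding T_def[symmetric] by (auto simp: card_insert_if)
  have T2: "v \<in> T w" if "v \<in> V" "w \<in> T v" for v w
    using that reach_sym by (auto simp: T_def)
  have T4: "T w = T v" if "v \<in> V" "w \<in> T v" for v w
  proof -
    have wv: "w \<in> V" "reach F v w" using that by (auto simp: T_def)
    show ?thesis using wv reach_sym reach_trans unfolding T_def by meson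
  qed
  have T3: "T v \<subseteq> P i" if v: "v \<in> V" "T v \<inter> S = {}" "v \<in> P i" "i \<in> I" for v i
  proof -
    obtain a b c where abc: "v \<in> {a,b,c}" "T v = {a,b,c}" "{e\<in>F. e \<subseteq> {a, b, c}} = {{a, b}, {b, c}}"
      using H[OF v(1)] unfolding T_def[symmetric] by blast
    have ab: "{a,b} \<in> E" "{b,c} \<in> E" using abc(3) FE by blast+
    have nS: "a \<notin> S" "b \<notin> S" "c \<notin> S" using abc(2) v(2) by auto
    have ba: "{b,a} \<in> E" "{c,b} \<in> E" using ab by (simp_all add: insert_commute)
    have "b \<in> P i"
    proof -
      consider "v = a" | "v = b" | "v = c" using abc(1) by auto
      then show ?thesis
      proof cases
        case 1 then show ?thesis using closed[OF ab(1) v(4)] v(3) nS by auto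
      next
        case 2 then show ?thesis using v(3) by simp
      next
        case 3 then show ?thesis using closed[OF ba(2) v(4)] v(3) nS by auto
      qed
    qed
    then have "a \<in> P i" "c \<in> P i" using closed[OF ba(1) v(4)] closed[OF ab(2) v(4)] nS by auto
    then show ?thesis using abc(2) \<open>b \<in> P i\<close> by auto
  qed
  define M where "M = {v \<in> V - S. T v \<inter> S \<noteq> {}}"
  have finS: "finite S" using SV fin finite_subset by blast
  have M1: "M \<subseteq> (\<Union>s\<in>S. T s - S)"
  proof
    fix v assume "v \<in> M"
    then obtain s where s: "s \<in> T v" "s \<in> S" "v \<in> V" "v \<notin> S" by (auto simp: M_def)
    then have "v \<in> T s" using T2 by blast
    then show "v \<in> (\<Union>s\<in>S. T s - S)" using s by auto
  qed
  have M2: "card (T s - S) \<le> 2" if "s \<in> S" for s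
  proof -
    have sV: "s \<in> V" using that SV by auto
    have "T s - S \<subseteq> T s - {s}" using that by auto
    then have "card (T s - S) \<le> card (T s - {s})" by (intro card_mono) (auto simp: finT)
    also have "\<dots> = 2" using T1[OF sV] finT by simp
    finally show ?thesis .
  qed
  have "card M \<le> card (\<Union>s\<in>S. T s - S)"
    using M1 finS finT by (intro card_mono) auto
  also have "\<dots> \<le> (\<Sum>s\<in>S. card (T s - S))" using finS by (rule card_UN_le)
  also have "\<dots> \<le> (\<Sum>s\<in>S. 2)" using M2 by (intro sum_mono) auto
  finally have cardM: "card M \<le> 2 * card S" by simp
  have Pi: "card (P i) mod 3 \<le> card (M \<inter> P i)" if i: "i \<in> I" for i
  proof -
    define R where "R = P i - M"
    have finP: "finite (P i)" using PV[OF i] fin finite_subset by blast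
    have Rchar: "R = {v \<in> P i. T v \<inter> S = {}}" using PV[OF i] by (auto simp: R_def M_def)
    have RV: "R \<subseteq> V" using PV[OF i] by (auto simp: R_def)
    have U: "\<Union>(T ` R) = R"
    proof
      show "\<Union>(T ` R) \<subseteq> R"
      proof
        fix w assume "w \<in> \<Union>(T ` R)"
        then obtain v where v: "v \<in> R" "w \<in> T v" by auto
        have vV: "v \<in> V" using v RV by auto
        have "T v \<inter> S = {}" "v \<in> P i" using v Rchar by auto
        then have "T v \<subseteq> P i" using T3 vV i by blast
        moreover have "T w = T v" using T4 vV v by blast
        ultimately show "w \<in> R" using v(2) \<open>T v \<inter> S = {}\<close> Rchar by auto
      qed
      show "R \<subseteq> \<Union>(T ` R)" using T1 RV by blast
    qed
    have pw: "pairwise disjnt (T ` R)"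
    proof (rule pairwiseI)
      fix X Y assume XY: "X \<in> T ` R" "Y \<in> T ` R" "X \<noteq> Y"
      then obtain v w where vw: "v \<in> R" "w \<in> R" "X = T v" "Y = T w" by auto
      show "disjnt X Y"
      proof (rule ccontr)
        assume "\<not> disjnt X Y"
        then obtain u where "u \<in> T v" "u \<in> T w" using vw by (auto simp: disjnt_def)
        then have "T u = T v" "T u = T w" using T4 vw RV by blast+
        then show False using XY vw by simp
      qed
    qed
    have "card (\<Union>(T ` R)) = sum card (T ` R)" by (rule card_Union_disjoint[OF pw]) (auto simp: finT)
    then have "card R = sum card (T ` R)" using U by simp
    also have "\<dots> = sum (\<lambda>X. 3) (T ` R)" using T1 RV by (intro sum.cong) auto
    finally have c3: "card R = 3 * card (T ` R)" by simp
    have "card (P i) = card (M \<inter> P i) + card R"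
      unfolding R_def using finP by (metis Diff_Diff_Int Int_commute card_Diff_subset_Int card_Int_Diff finite_Diff finite_Int inf_le2)
    then have "card (P i) mod 3 = card (M \<inter> P i) mod 3" using c3 by simp
    then show ?thesis by simp
  qed
  have "(\<Sum>i\<in>I. card (P i) mod 3) \<le> (\<Sum>i\<in>I. card (M \<inter> P i))" using Pi by (intro sum_mono) auto
  also have "\<dots> = card (\<Union>i\<in>I. M \<inter> P i)"
  proof (rule card_UN_disjoint[symmetric])
    show "finite I" by (rule finI)
    show "\<forall>i\<in>I. finite (M \<inter> P i)" using PV fin finite_subset by blast
    show "\<forall>i\<in>I. \<forall>j\<in>I. i \<noteq> j \<longrightarrow> M \<inter> P i \<inter> (M \<inter> P j) = {}" using disj by blast
  qed
  also have "\<dots> \<le> card M"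
  proof (rule card_mono)
    show "finite M" using fin by (auto simp: M_def)
  qed auto
  finally show False using cardM big by linarith
qed


definition pgr :: "nat \<Rightarrow> bool" where "pgr r \<longleftrightarrow> r \<in> {0,1,5,9,13,18,22}"

lemma fo_le: assumes "r < 26" shows "fo r \<le> 9"
  using less26[OF assms] by (elim disjE) (simp_all add: fo_def)

lemma fin_cross:
  assumes "ra < 26" "rc < 26" "3 \<le> fo ra" "3 \<le> fo rc" "ra < rc" "rc < ra + fo ra" "ra + fo ra < rc + fo rc"
  shows "pgr ra \<noteq> pgr rc"
  using less26[OF assms(1)] less26[OF assms(2)] assms(3-)
  by (elim disjE) (simp_all add: fo_def pgr_def)


definition Ed :: "nat \<Rightarrow> nat set set" where
  "Ed m = {{v,w} | v w. v < 26*m+26 \<and> w \<in> nbs m v}"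
definition Gr :: "nat \<Rightarrow> nat graph" where
  "Gr m = ({..<26*m+26}, Ed m)"

lemma edge_pair:
  assumes "{a,b} \<in> Ed m"
  shows "a \<le> 26*m+25 \<and> b \<in> nbs m a"
proof -
  obtain v w where vw: "{a,b} = {v,w}" "v < 26*m+26" "w \<in> nbs m v" using assms by (auto simp: Ed_def)
  have s: "w \<le> 26*m+25 \<and> v \<in> nbs m w" using nbs_sym[of v m w] vw by simp
  from vw(1) consider "a = v" "b = w" | "a = w" "b = v" by (auto simp: doubleton_eq_iff)
  then show ?thesis
  proof cases
    case 1 then show ?thesis using vw by simp
  next
    case 2 then show ?thesis using s by simp
  qed
qed

lemma edge_in: "v \<le> 26*m+25 \<Longrightarrow> w \<in> nbs m v \<Longrightarrow> {v,w} \<in> Ed m"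
  unfolding Ed_def by (rule CollectI, rule exI[of _ v], rule exI[of _ w]) simp

lemma Ed_cases:
  assumes "e \<in> Ed m"
  obtains v w where "e = {v,w}" "v \<le> 26*m+25" "w \<le> 26*m+25" "w \<in> nbs m v" "v \<noteq> w"
proof -
  obtain v w where vw: "e = {v,w}" "v < 26*m+26" "w \<in> nbs m v" using assms by (auto simp: Ed_def)
  have "w \<le> 26*m+25" using nbs_sym[of v m w] vw by simp
  moreover have "v \<noteq> w" using nbs_card[of v m] vw by auto
  ultimately show ?thesis using that vw by simp
qed

lemma Gr_simple: "simple_graph (Gr m)"
  unfolding simple_graph_def Gr_def fst_conv snd_conv
proof (intro conjI ballI)
  fix e assume "e \<in> Ed m"
  then obtain v w where "e = {v,w}" "v \<le> 26*m+25" "w \<le> 26*m+25" "v \<noteq> w" by (rule Ed_cases)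
  then show "\<exists>u v. u \<noteq> v \<and> u \<in> {..<26 * m + 26} \<and> v \<in> {..<26 * m + 26} \<and> e = {u, v}"
    by (intro exI[of _ v] exI[of _ w]) simp
qed simp

lemma Gr_cubic: "cubic (Gr m)"
  unfolding cubic_def Gr_def fst_conv
proof
  fix v assume v: "v \<in> {..<26*m+26}"
  then have vle: "v \<le> 26*m+25" by simp
  have eq: "{e \<in> Ed m. v \<in> e} = (\<lambda>w. {v,w}) ` nbs m v"
  proof
    show "{e \<in> Ed m. v \<in> e} \<subseteq> (\<lambda>w. {v,w}) ` nbs m v"
    proof
      fix e assume e: "e \<in> {e \<in> Ed m. v \<in> e}"
      then obtain a b where ab: "e = {a,b}" "a \<le> 26*m+25" "b \<le> 26*m+25" "b \<in> nbs m a" "a \<noteq> b"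
        by (auto elim: Ed_cases)
      have "v = a \<or> v = b" using e ab by auto
      then show "e \<in> (\<lambda>w. {v,w}) ` nbs m v"
      proof
        assume "v = a" then show ?thesis using ab by auto
      next
        assume "v = b"
        then have "a \<in> nbs m v" using nbs_sym[of a m b] ab by simp
        then show ?thesis using ab \<open>v = b\<close> by (auto simp: insert_commute)
      qed
    qed
    show "(\<lambda>w. {v,w}) ` nbs m v \<subseteq> {e \<in> Ed m. v \<in> e}" using edge_in[OF vle] by auto
  qed
  have inj: "inj_on (\<lambda>w. {v,w}) (nbs m v)" by (auto simp: inj_on_def doubleton_eq_iff)
  show "degree ({..<26*m+26}, Ed m) v = 3"
    unfolding degree_def snd_conv eq card_image[OF inj] using nbs_card[OF vle] by simp
qed

lemma Gr_bip: "bipartite (Gr m)"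
  unfolding bipartite_def Gr_def fst_conv snd_conv
proof (intro exI[of _ "{v \<in> {..<26*m+26}. even v}"] conjI ballI)
  fix e assume "e \<in> Ed m"
  then obtain v w where vw: "e = {v,w}" "v \<le> 26*m+25" "w \<le> 26*m+25" "w \<in> nbs m v" "v \<noteq> w" by (rule Ed_cases)
  have p: "even v \<longleftrightarrow> odd w" using nbs_par[OF vw(2)] vw(4) by simp
  show "card (e \<inter> {v \<in> {..<26*m+26}. even v}) = 1"
  proof (cases "even v")
    case True
    then have "e \<inter> {v \<in> {..<26*m+26}. even v} = {v}" using vw p by auto
    then show ?thesis by simp
  next
    case False
    then have "e \<inter> {v \<in> {..<26*m+26}. even v} = {w}" using vw p by auto
    then show ?thesis by simp
  qed
qed auto

lemma Gr_2conn: "two_connected (Gr m)"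
  unfolding Gr_def
proof (rule st_two_connected)
  show "2 < 26*m+26" by simp
  have "{0, 26*m+25} \<in> Ed m" using edge_in[of 0 m "26*m+25"] nb0z[of m] by simp
  moreover have "26*m+26-1 = 26*m+25" by simp
  ultimately show "{0, 26*m+26-1} \<in> Ed m" by metis
next
  fix v assume v: "0 < v" "v < 26*m+26-1"
  have "prv m v < v" using v by (auto simp: prv_def)
  moreover have "prv m v \<in> nbs m v" by (simp add: nbs_def)
  ultimately show "\<exists>w<v. {w,v} \<in> Ed m" using edge_in[of v m] v by (auto simp: insert_commute)
next
  fix v assume v: "0 < v" "v < 26*m+26-1"
  have "v < nxt m v" using v by (auto simp: nxt_def)
  moreover have n: "nxt m v \<in> nbs m v" by (simp add: nbs_def)
  moreover have "nxt m v \<le> 26*m+25" using nbs_sym[of v m "nxt m v"] n v by simp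
  ultimately show "\<exists>w. v < w \<and> w < 26*m+26 \<and> {v,w} \<in> Ed m" using edge_in[of v m] v by auto
qed


lemma minmax2: "(a::nat) < b \<Longrightarrow> Min {a,b} = a \<and> Max {a,b} = b"
proof -
  assume "a < b"
  then have "Min {a,b} = a" by (intro Min_eqI) auto
  moreover have "Max {a,b} = b" using \<open>a < b\<close> by (intro Max_eqI) auto
  ultimately show ?thesis by simp
qed

lemma big_edge:
  assumes "{a,b} \<in> Ed m" "a < c" "c < b"
  shows "b = a + fo (a mod 26) \<and> 3 \<le> fo (a mod 26) \<and> a mod 26 + fo (a mod 26) \<le> 25 \<and> (a = 0 \<longrightarrow> b \<noteq> 26*m+25)
     \<or> (a = 0 \<and> b = 26*m+25)"
proof -
  have e: "a \<le> 26*m+25" "b \<in> nbs m a" using edge_pair[OF assms(1)] by auto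
  have "b = a+1 \<or> (a = 0 \<and> b = 26*m+25) \<or> (b = a + fo (a mod 26) \<and> 3 \<le> fo (a mod 26) \<and> a mod 26 + fo (a mod 26) \<le> 25)"
  proof -
    have "a < b" using assms(2,3) by simp
    then show ?thesis using nbs_fwd[OF e(1), where w = b] e(2) by blast
  qed
  then show ?thesis using assms(2,3) by auto
qed

lemma Gr_planar: "planar (Gr m)"
  unfolding Gr_def
proof (rule book_planar[where pg = "\<lambda>e. 3 \<le> Max e - Min e \<and> Max e - Min e \<le> 9 \<and> pgr (Min e mod 26)"])
  show "\<forall>e\<in>Ed m. \<exists>u v. u < v \<and> e = {u,v}"
  proof
    fix e assume "e \<in> Ed m"
    then obtain v w where vw: "e = {v,w}" "v \<noteq> w" by (rule Ed_cases)
    show "\<exists>u v. u < v \<and> e = {u,v}"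
    proof (cases "v < w")
      case True then show ?thesis using vw by blast
    next
      case False then have "w < v" using vw by simp
      then show ?thesis using vw by (intro exI[of _ w] exI[of _ v]) (auto simp: insert_commute)
    qed
  qed
next
  fix a b c d assume ab: "{a,b} \<in> Ed m" and cd: "{c,d} \<in> Ed m" and o: "a < c" "c < b" "b < d"
  have dB: "d \<le> 26*m+25"
  proof -
    have "c \<le> 26*m+25" "d \<in> nbs m c" using edge_pair[OF cd] by auto
    then show ?thesis using nbs_sym[of c m d] by simp
  qed
  have B1: "b = a + fo (a mod 26) \<and> 3 \<le> fo (a mod 26) \<and> a mod 26 + fo (a mod 26) \<le> 25"
    using big_edge[OF ab o(1,2)] o dB by auto
  have B2: "d = c + fo (c mod 26) \<and> 3 \<le> fo (c mod 26) \<and> c mod 26 + fo (c mod 26) \<le> 25"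
    using big_edge[OF cd, of b] o by auto
  define q where "q = a div 26"
  define ra where "ra = a mod 26"
  have a: "a = 26*q + ra" "ra < 26" unfolding q_def ra_def by simp_all
  define rc where "rc = ra + (c - a)"
  have c: "c = 26*q + rc" using a o unfolding rc_def by simp
  have rc26: "rc < 26" using B1 o unfolding rc_def ra_def by linarith
  have crc: "c mod 26 = rc" using c rc26 by simp
  have np: "pgr ra \<noteq> pgr rc"
  proof (rule fin_cross[OF a(2) rc26])
    show "3 \<le> fo ra" using B1 ra_def by simp
    show "3 \<le> fo rc" using B2 crc by simp
    show "ra < rc" using o unfolding rc_def by simp
    show "rc < ra + fo ra" using B1 o a unfolding rc_def ra_def by linarith
    have "b = a + fo ra" using B1 ra_def by simp
    moreover have "d = c + fo rc" using B2 crc by simp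
    ultimately show "ra + fo ra < rc + fo rc" using o a c by linarith
  qed
  have mm1: "Min {a,b} = a" "Max {a,b} = b" using minmax2[of a b] o by auto
  have mm2: "Min {c,d} = c" "Max {c,d} = d" using minmax2[of c d] o by auto
  have f1: "fo ra \<le> 9" using fo_le[OF a(2)] .
  have f2: "fo rc \<le> 9" using fo_le[OF rc26] .
  show "(3 \<le> Max {a, b} - Min {a, b} \<and> Max {a, b} - Min {a, b} \<le> 9 \<and> pgr (Min {a, b} mod 26)) \<noteq>
        (3 \<le> Max {c, d} - Min {c, d} \<and> Max {c, d} - Min {c, d} \<le> 9 \<and> pgr (Min {c, d} mod 26))"
    unfolding mm1 mm2 using B1 B2 np f1 f2 crc ra_def by auto
qed


lemma pend_dec:
  assumes "v \<in> pend j b" "b \<in> {1,9,18::nat}"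
  shows "v = 26*j + (v - 26*j) \<and> v - 26*j < 26 \<and> b \<le> v - 26*j \<and> v - 26*j < b + 8
         \<and> v mod 26 = v - 26*j \<and> v div 26 = j"
proof -
  define t where "t = v - 26*j"
  have t: "v = 26*j + t" "b \<le> t" "t < b + 8" "t < 26" using assms by (auto simp: pend_def t_def)
  have "v mod 26 = t" "v div 26 = j" using t by simp_all
  then show ?thesis using t unfolding t_def by simp
qed

lemma Gr_noL: "\<not> has_Lambda_factor (Gr m)"
  unfolding Gr_def
proof (rule no_lambda[where S = "{v \<in> {..<26*m+26}. v mod 26 = 0 \<or> v mod 26 = 17}"
      and I = "{..m} \<times> {1,9,18}" and P = "\<lambda>(j,b). pend j b"])
  show "finite {..<26*m+26}" by simp
  show "{v \<in> {..<26*m+26}. v mod 26 = 0 \<or> v mod 26 = 17} \<subseteq> {..<26*m+26}" by auto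
  show "finite ({..m} \<times> {1::nat,9,18})" by simp
next
  fix i assume i: "i \<in> {..m} \<times> {1::nat,9,18}"
  then obtain j b where jb: "i = (j,b)" "j \<le> m" "b \<in> {1::nat,9,18}" by auto
  show "(case i of (j, b) \<Rightarrow> pend j b) \<subseteq> {..<26*m+26} - {v \<in> {..<26*m+26}. v mod 26 = 0 \<or> v mod 26 = 17}"
  proof
    fix v assume "v \<in> (case i of (j, b) \<Rightarrow> pend j b)"
    then have v: "v \<in> pend j b" using jb by simp
    have d: "v = 26*j + (v - 26*j)" "v - 26*j < 26" "b \<le> v - 26*j" "v - 26*j < b + 8" "v mod 26 = v - 26*j"
      using pend_dec[OF v jb(3)] by auto
    have "v < 26*m+26" using d jb(2) by linarith
    moreover have "v mod 26 \<noteq> 0" "v mod 26 \<noteq> 17" using d jb(3) by auto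
    ultimately show "v \<in> {..<26*m+26} - {v \<in> {..<26*m+26}. v mod 26 = 0 \<or> v mod 26 = 17}" by auto
  qed
next
  fix i i' assume i: "i \<in> {..m} \<times> {1::nat,9,18}" and i': "i' \<in> {..m} \<times> {1::nat,9,18}" and ne: "i \<noteq> i'"
  obtain j b where jb: "i = (j,b)" "b \<in> {1::nat,9,18}" using i by auto
  obtain j' b' where jb': "i' = (j',b')" "b' \<in> {1::nat,9,18}" using i' by auto
  show "(case i of (j, b) \<Rightarrow> pend j b) \<inter> (case i' of (j, b) \<Rightarrow> pend j b) = {}"
  proof (rule ccontr)
    assume "(case i of (j, b) \<Rightarrow> pend j b) \<inter> (case i' of (j, b) \<Rightarrow> pend j b) \<noteq> {}"
    then obtain v where v: "v \<in> pend j b" "v \<in> pend j' b'" using jb jb' by auto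
    have d: "v div 26 = j" "b \<le> v mod 26" "v mod 26 < b + 8" using pend_dec[OF v(1) jb(2)] by auto
    have d': "v div 26 = j'" "b' \<le> v mod 26" "v mod 26 < b' + 8" using pend_dec[OF v(2) jb'(2)] by auto
    have "j = j'" using d d' by simp
    moreover have "b = b'" using d d' jb(2) jb'(2) by auto
    ultimately show False using ne jb jb' by simp
  qed
next
  fix i a c assume e: "{a,c} \<in> Ed m" and i: "i \<in> {..m} \<times> {1::nat,9,18}" and a: "a \<in> (case i of (j, b) \<Rightarrow> pend j b)"
  obtain j b where jb: "i = (j,b)" "b \<in> {1::nat,9,18}" using i by auto
  have a': "a \<in> pend j b" using a jb by simp
  have d: "a div 26 = j" "b \<le> a mod 26" "a mod 26 < b + 8" using pend_dec[OF a' jb(2)] by auto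
  have ea: "a \<le> 26*m+25" "c \<in> nbs m a" using edge_pair[OF e] by auto
  have cB: "c \<le> 26*m+25" using nbs_sym[OF ea(1) ea(2)] by simp
  have "c \<in> pend (a div 26) b \<or> c mod 26 = 0 \<or> c mod 26 = 17"
    using nbs_pend[OF ea(1), where c = c and b = b] ea(2) jb(2) d by blast
  then show "c \<in> (case i of (j, b) \<Rightarrow> pend j b) \<union> {v \<in> {..<26*m+26}. v mod 26 = 0 \<or> v mod 26 = 17}"
    using jb d cB by auto
next
  let ?S = "{v \<in> {..<26*m+26}. v mod 26 = 0 \<or> v mod 26 = 17}"
  have Ssub: "?S \<subseteq> (\<lambda>j. 26*j) ` {..m} \<union> (\<lambda>j. 26*j+17) ` {..m}"
  proof
    fix v assume v: "v \<in> ?S"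
    have vd: "v = 26*(v div 26) + v mod 26" by simp
    have "v div 26 \<le> m" using v by auto
    have "v mod 26 = 0 \<or> v mod 26 = 17" using v by auto
    then show "v \<in> (\<lambda>j. 26*j) ` {..m} \<union> (\<lambda>j. 26*j+17) ` {..m}"
    proof
      assume "v mod 26 = 0"
      then have "v = 26*(v div 26)" using vd by simp
      then show ?thesis using \<open>v div 26 \<le> m\<close> by blast
    next
      assume "v mod 26 = 17"
      then have "v = 26*(v div 26) + 17" using vd by simp
      then show ?thesis using \<open>v div 26 \<le> m\<close> by blast
    qed
  qed
  have "card ?S \<le> card ((\<lambda>j. 26*j) ` {..m} \<union> (\<lambda>j. 26*j+17) ` {..m})"
    using Ssub by (intro card_mono) auto
  also have "\<dots> \<le> card ((\<lambda>j. 26*j) ` {..m}) + card ((\<lambda>j. 26*j+17) ` {..m})" by (rule card_Un_le)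
  also have "\<dots> \<le> card {..m} + card {..m}" by (intro add_mono card_image_le) auto
  finally have cS: "card ?S \<le> 2*(m+1)" by simp
  have cp: "card (pend j b) = 8" for j b by (simp add: pend_def)
  have "(\<Sum>i\<in>{..m} \<times> {1::nat,9,18}. card (case i of (j, b) \<Rightarrow> pend j b) mod 3) = (\<Sum>i\<in>{..m} \<times> {1::nat,9,18}. 2)"
    by (intro sum.cong) (auto simp: cp)
  also have "\<dots> = 6*(m+1)" by (simp add: card_cartesian_product)
  finally have eq: "(\<Sum>i\<in>{..m} \<times> {1::nat,9,18}. card (case i of (j, b) \<Rightarrow> pend j b) mod 3) = 6*(m+1)" .
  show "2 * card ?S < (\<Sum>i\<in>{..m} \<times> {1::nat,9,18}. card (case i of (j, b) \<Rightarrow> pend j b) mod 3)"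
    unfolding eq
  proof -
    have "2 * card ?S \<le> 4 * (m+1)" using cS by simp
    also have "\<dots> < 6 * (m+1)" by simp
    finally show "2 * card ?S < 6 * (m+1)" .
  qed
qed


lemma Gr_card: "card (fst (Gr m)) = 26*m+26" by (simp add: Gr_def)

theorem mainTheorem1:
  shows "\<exists>S :: nat graph set. infinite S \<and>
    (\<forall>G\<in>S. simple_graph G \<and> card (fst G) mod 6 = 0 \<and> two_connected G \<and> cubic G \<and>
            bipartite G \<and> planar G \<and> \<not> has_Lambda_factor G) \<and>
    (\<forall>G\<in>S. \<forall>H\<in>S. G \<noteq> H \<longrightarrow> \<not> graph_iso G H)"
proof -
  let ?F = "range (\<lambda>k. Gr (3*k+2))"
  have inj: "inj (\<lambda>k. Gr (3*k+2))"
  proof (rule injI)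
    fix a b assume "Gr (3*a+2) = Gr (3*b+2)"
    then have "card (fst (Gr (3*a+2))) = card (fst (Gr (3*b+2)))" by simp
    then show "a = b" unfolding Gr_card by simp
  qed
  have A: "infinite ?F" using range_inj_infinite[OF inj] .
  have B: "\<forall>G\<in>?F. simple_graph G \<and> card (fst G) mod 6 = 0 \<and> two_connected G \<and> cubic G \<and>
            bipartite G \<and> planar G \<and> \<not> has_Lambda_factor G"
  proof
    fix G assume "G \<in> ?F"
    then obtain k where G: "G = Gr (3*k+2)" by auto
    have "card (fst G) = 78*(k+1)" unfolding G Gr_card by simp
    then have "card (fst G) mod 6 = 0" by simp
    then show "simple_graph G \<and> card (fst G) mod 6 = 0 \<and> two_connected G \<and> cubic G \<and>
            bipartite G \<and> planar G \<and> \<not> has_Lambda_factor G"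
      unfolding G using Gr_simple Gr_2conn Gr_cubic Gr_bip Gr_planar Gr_noL by simp
  qed
  have C: "\<forall>G\<in>?F. \<forall>H\<in>?F. G \<noteq> H \<longrightarrow> \<not> graph_iso G H"
  proof (intro ballI impI)
    fix G H assume G: "G \<in> ?F" and H: "H \<in> ?F" and ne: "G \<noteq> H"
    obtain k where k: "G = Gr (3*k+2)" using G by auto
    obtain l where l: "H = Gr (3*l+2)" using H by auto
    have "k \<noteq> l" using ne k l by auto
    then have cne: "card (fst G) \<noteq> card (fst H)" unfolding k l Gr_card by simp
    show "\<not> graph_iso G H"
    proof
      assume "graph_iso G H"
      then obtain f where "bij_betw f (fst G) (fst H)" unfolding graph_iso_def by auto
      then have "card (fst G) = card (fst H)" by (rule bij_betw_same_card)
      then show False using cne by simp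
    qed
  qed
  show ?thesis using A B C by blast
qed


end
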